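(* Let $d\ge 1$ and $n\ge1$ be integers, and let $g$ be a real form of degree $2n$ in $d$ variables with $g(\mathbf{x})\ge0$ for all $\mathbf{x}\in\mathbb{R}^d$ and $g(\mathbf{x})=0$ only if $\mathbf{x}=0$. Let $d\mu=\exp(-g(\mathbf{x}))\,d\mathbf{x}$ on $\mathbb{R}^d$ and $Z(g):=\int_{\mathbb{R}^d}\exp(-g(\mathbf{x}))\,d\mathbf{x}$. Let $\{P_{\boldsymbol{\alpha}}:\boldsymbol{\alpha}\in\mathbb{N}^d_{2n}\}$ be any basis of the space of degree-$2n$ forms that is orthonormal in $L^2(\mu)$, $\mathbb{P}_{2n}(\mathbf{x}):=(P_{\boldsymbol{\alpha}}(\mathbf{x}))_{\boldsymbol{\alpha}}$, $\tilde{\mathbf{g}}$ the coefficient vector of $g$ in this basis (so $g=\langle\tilde{\mathbf{g}},\mathbb{P}_{2n}\rangle$), and $\tilde{\boldsymbol{\mu}}^{(2n)}:=\int\mathbb{P}_{2n}\,d\mu$. Then \[Z(g)=\frac{4n^2}{d\,(d+2n)}\,\|\tilde{\mathbf{g}}\|^2=\frac{d+2n}{d}\,\|\tilde{\boldsymbol{\mu}}^{(2n)}\|^2,\] where $\|\cdot\|$ is the Euclidean norm.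
   Context: $\mathbb{N}^d_{2n}=\{\boldsymbol{\alpha}\in\mathbb{N}^d:\sum_i\alpha_i=2n\}$; the degree-$2n$ forms in $d$ variables form a vector space with basis indexed by $\mathbb{N}^d_{2n}$. *)

theory Defs
  imports "HOL-Analysis.Analysis"
begin

text \<open>Multi-indices alpha in N^d with |alpha| = k; the index type 'd (finite) has CARD('d) = d.\<close>
definition exps :: "nat \<Rightarrow> ('d::finite \<Rightarrow> nat) set" where
  "exps k = {\<alpha>. (\<Sum>i\<in>UNIV. \<alpha> i) = k}"

definition monomial_fn :: "('d::finite \<Rightarrow> nat) \<Rightarrow> real^'d \<Rightarrow> real" where
  "monomial_fn \<alpha> x = (\<Prod>i\<in>UNIV. (x $ i) ^ \<alpha> i)"

definition is_form :: "nat \<Rightarrow> (real^'d::finite \<Rightarrow> real) \<Rightarrow> bool" where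
  "is_form k f \<longleftrightarrow> (\<exists>c. f = (\<lambda>x. \<Sum>\<alpha>\<in>exps k. c \<alpha> * monomial_fn \<alpha> x))"

definition Zg :: "(real^'d::finite \<Rightarrow> real) \<Rightarrow> real" where
  "Zg g = (\<integral>x. exp (- g x) \<partial>lborel)"

definition L2_inner :: "(real^'d::finite \<Rightarrow> real) \<Rightarrow> (real^'d \<Rightarrow> real) \<Rightarrow> (real^'d \<Rightarrow> real) \<Rightarrow> real" where
  "L2_inner g p q = (\<integral>x. p x * q x * exp (- g x) \<partial>lborel)"

definition orthonormal_form_basis ::
  "nat \<Rightarrow> (real^'d::finite \<Rightarrow> real) \<Rightarrow> (('d \<Rightarrow> nat) \<Rightarrow> real^'d \<Rightarrow> real) \<Rightarrow> bool" where
  "orthonormal_form_basis k g P \<longleftrightarrow>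
     (\<forall>\<alpha>\<in>exps k. is_form k (P \<alpha>)) \<and>
     (\<forall>f. is_form k f \<longrightarrow> (\<exists>c. f = (\<lambda>x. \<Sum>\<alpha>\<in>exps k. c \<alpha> * P \<alpha> x))) \<and>
     (\<forall>\<alpha>\<in>exps k. integrable lborel (\<lambda>x. (P \<alpha> x)\<^sup>2 * exp (- g x))) \<and>
     (\<forall>\<alpha>\<in>exps k. \<forall>\<beta>\<in>exps k. L2_inner g (P \<alpha>) (P \<beta>) = (if \<alpha> = \<beta> then 1 else 0))"

end

theory Submission
  imports Defs "HOL-Real_Asymp.Real_Asymp"
begin

lemma exps_finite: "finite (exps k :: ('d::finite \<Rightarrow> nat) set)"
proof -
  have "(exps k :: ('d \<Rightarrow> nat) set) \<subseteq> {\<alpha>. \<forall>i. \<alpha> i \<in> {..k}}"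
  proof
    fix \<alpha> :: "'d \<Rightarrow> nat" assume "\<alpha> \<in> exps k"
    then have "\<alpha> i \<le> k" for i unfolding exps_def using member_le_sum[of i UNIV \<alpha>] by auto
    then show "\<alpha> \<in> {\<alpha>. \<forall>i. \<alpha> i \<in> {..k}}" by auto
  qed
  moreover have "finite {\<alpha>::'d\<Rightarrow>nat. \<forall>i. \<alpha> i \<in> {..k}}"
    using finite_PiE[of "UNIV::'d set" "\<lambda>_. {..k}"] unfolding PiE_def Pi_def extensional_def by simp
  ultimately show ?thesis by (rule finite_subset)
qed

lemma monomial_scale: "monomial_fn \<alpha> (c *\<^sub>R x) = c ^ (\<Sum>i\<in>UNIV. \<alpha> i) * monomial_fn \<alpha> x"
  unfolding monomial_fn_def by (simp add: power_mult_distrib prod.distrib power_sum)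

lemma monomial_meas: "monomial_fn \<alpha> \<in> borel_measurable borel"
  unfolding monomial_fn_def by measurable

lemma form_scale: assumes "is_form k f" shows "f (c *\<^sub>R x) = c ^ k * f x"
proof -
  obtain a where f: "f = (\<lambda>x. \<Sum>\<alpha>\<in>exps k. a \<alpha> * monomial_fn \<alpha> x)" using assms is_form_def by blast
  show ?thesis unfolding f by (simp add: monomial_scale exps_def sum_distrib_left algebra_simps)
qed

lemma form_meas: assumes "is_form k f" shows "f \<in> borel_measurable borel"
proof -
  obtain a where f: "f = (\<lambda>x. \<Sum>\<alpha>\<in>exps k. a \<alpha> * monomial_fn \<alpha> x)" using assms is_form_def by blast
  show ?thesis unfolding f using monomial_meas by measurable
qed

lemma scale_nn:
  fixes f :: "real^'d::finite \<Rightarrow> ennreal"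
  assumes "f \<in> borel_measurable borel" "c > 0"
  shows "(\<integral>\<^sup>+x. f x \<partial>lborel) = ennreal (c ^ CARD('d)) * (\<integral>\<^sup>+x. f (c *\<^sub>R x) \<partial>lborel)"
proof -
  have "(\<integral>\<^sup>+x. f x \<partial>lborel) = (\<integral>\<^sup>+x. f x \<partial>density (distr lborel borel (\<lambda>x. 0 + c *\<^sub>R x)) (\<lambda>_. \<bar>c\<bar>^DIM(real^'d)))"
    using lborel_affine[of c "0::real^'d"] assms by simp
  also have "\<dots> = (\<integral>\<^sup>+x. ennreal (c ^ CARD('d)) * f (c *\<^sub>R x) \<partial>lborel)"
    using assms by (subst nn_integral_density) (auto simp: nn_integral_distr)
  also have "\<dots> = ennreal (c ^ CARD('d)) * (\<integral>\<^sup>+x. f (c *\<^sub>R x) \<partial>lborel)"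
    using assms by (subst nn_integral_cmult) auto
  finally show ?thesis .
qed

lemma L1: assumes "(b::real) > 0"
  shows "(\<integral>\<^sup>+t. ennreal (b * exp (- t * b)) * indicator {1..} t \<partial>lborel) = ennreal (exp (- b))"
proof -
  have "(\<integral>\<^sup>+t. ennreal (b * exp (- t * b)) * indicator {1..} t \<partial>lborel) = ennreal (0 - (- exp (- 1 * b)))"
  proof (rule nn_integral_FTC_atLeast[where F="\<lambda>t. - exp (- t * b)"])
    show "(\<lambda>t. b * exp (- t * b)) \<in> borel_measurable borel" by measurable
    show "((\<lambda>t. - exp (- t * b)) has_real_derivative b * exp (- t * b)) (at t)" for t
      by (auto intro!: derivative_eq_intros)
    show "0 \<le> b * exp (- t * b)" for t using assms by simp
    show "((\<lambda>t. - exp (- t * b)) \<longlongrightarrow> 0) at_top" using assms by real_asymp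
  qed
  then show ?thesis by simp
qed

lemma L3: assumes "(a::real) > 0"
  shows "(\<integral>\<^sup>+t. ennreal (t powr (- a - 1)) * indicator {1..} t \<partial>lborel) = ennreal (1 / a)"
proof -
  have "(\<integral>\<^sup>+t. ennreal (t powr (- a - 1)) * indicator {1..} t \<partial>lborel) = ennreal (0 - (- (1 powr (-a)) / a))"
  proof (rule nn_integral_FTC_atLeast[where F="\<lambda>t. - (t powr (-a)) / a"])
    show "(\<lambda>t. t powr (- a - 1)) \<in> borel_measurable borel" by measurable
    show "((\<lambda>t. - (t powr (-a)) / a) has_real_derivative t powr (- a - 1)) (at t)" if "1 \<le> t" for t
      using that assms by (auto intro!: derivative_eq_intros simp: field_simps powr_diff)
    show "0 \<le> t powr (- a - 1)" for t by simp
    show "((\<lambda>t. - (t powr (-a)) / a) \<longlongrightarrow> 0) at_top" using assms by real_asymp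
  qed
  then show ?thesis by simp
qed


lemma powr_lemma:
  fixes t :: real and n D k :: nat
  assumes "t \<ge> 1" "n \<ge> 1"
  defines "s \<equiv> t powr (-1 / (2*n))"
  shows "t * s ^ (2*n) = 1" "s ^ D * s ^ k * s ^ (2*n) = t powr (- ((real D + real k) / (2*n)) - 1)"
proof -
  have sp: "s > 0" using assms by simp
  have e: "s ^ m = t powr (- real m / (2*n))" for m
    using assms unfolding s_def by (simp add: powr_realpow[symmetric] powr_powr)
  have "s ^ (2*n) = t powr (-1)" using e[of "2*n"] assms by simp
  then show "t * s ^ (2*n) = 1" using assms by (simp add: powr_minus)
  have "s ^ D * s ^ k * s ^ (2*n) = s ^ (D + k + 2*n)" by (simp add: power_add)
  also have "\<dots> = t powr (- real (D + k + 2*n) / (2*n))" by (rule e)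
  also have "- real (D + k + 2*n) / (2*n) = - ((real D + real k) / (2*n)) - 1"
    using assms by (simp add: field_simps)
  finally show "s ^ D * s ^ k * s ^ (2*n) = t powr (- ((real D + real k) / (2*n)) - 1)" .
qed

lemma key_nn:
  fixes g h :: "real^'d::finite \<Rightarrow> real" and n k :: nat
  assumes n: "n \<ge> 1"
    and gm: "g \<in> borel_measurable borel" and hm: "h \<in> borel_measurable borel"
    and gpos: "\<And>x. x \<noteq> 0 \<Longrightarrow> g x > 0" and g0: "\<And>x. g x \<ge> 0"
    and h0: "\<And>x. h x \<ge> 0"
    and gs: "\<And>c x. c > 0 \<Longrightarrow> g (c *\<^sub>R x) = c ^ (2*n) * g x"
    and hs: "\<And>c x. c > 0 \<Longrightarrow> h (c *\<^sub>R x) = c ^ k * h x"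
  shows "(\<integral>\<^sup>+x. ennreal (h x * g x * exp (- g x)) \<partial>lborel)
        = ennreal ((real CARD('d) + real k) / (2*n)) * (\<integral>\<^sup>+x. ennreal (h x * exp (- g x)) \<partial>lborel)"
proof -
  note [measurable] = hm gm
  define a where "a = (real CARD('d) + real k) / (2*n)"
  have "0 < CARD('d)" by simp
  then have a0: "a > 0" unfolding a_def using n
    by (intro divide_pos_pos add_pos_nonneg) auto
  define G where "G = (\<integral>\<^sup>+x. ennreal (h x * g x * exp (- g x)) \<partial>lborel)"
  have "(\<integral>\<^sup>+x. ennreal (h x * exp (- g x)) \<partial>lborel)
      = (\<integral>\<^sup>+x. (\<integral>\<^sup>+t. ennreal (h x * (g x * exp (- t * g x))) * indicator {1..} t \<partial>lborel) \<partial>lborel)"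
  proof (rule nn_integral_cong_AE)
    show "AE x in lborel. ennreal (h x * exp (- g x))
        = (\<integral>\<^sup>+t. ennreal (h x * (g x * exp (- t * g x))) * indicator {1..} t \<partial>lborel)"
      using AE_lborel_singleton[of 0]
    proof eventually_elim
      case (elim x)
      have "(\<integral>\<^sup>+t. ennreal (h x * (g x * exp (- t * g x))) * indicator {1..} t \<partial>lborel)
          = (\<integral>\<^sup>+t. ennreal (h x) * (ennreal (g x * exp (- t * g x)) * indicator {1..} t) \<partial>lborel)"
        using h0 g0 by (intro nn_integral_cong) (simp add: ennreal_mult mult.assoc)
      also have "\<dots> = ennreal (h x) * (\<integral>\<^sup>+t. ennreal (g x * exp (- t * g x)) * indicator {1..} t \<partial>lborel)"
        by (rule nn_integral_cmult) measurable
      also have "\<dots> = ennreal (h x) * ennreal (exp (- g x))"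
        using L1[of "g x"] gpos[OF elim] by simp
      finally show ?case using h0 by (simp add: ennreal_mult)
    qed
  qed
  also have "\<dots> = (\<integral>\<^sup>+t. (\<integral>\<^sup>+x. ennreal (h x * (g x * exp (- t * g x))) * indicator {1..} t \<partial>lborel) \<partial>lborel)"
    by (rule lborel_pair.Fubini'[symmetric]) (simp add: case_prod_unfold cong: measurable_cong_sets)
  also have "\<dots> = (\<integral>\<^sup>+t. ennreal (t powr (- a - 1)) * indicator {1..} t * G \<partial>lborel)"
  proof (rule nn_integral_cong)
    fix t :: real
    show "(\<integral>\<^sup>+x. ennreal (h x * (g x * exp (- t * g x))) * indicator {1..} t \<partial>lborel)
        = ennreal (t powr (- a - 1)) * indicator {1..} t * G"
    proof (cases "t \<ge> 1")
      case False then show ?thesis by simp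
    next
      case True
      define s where "s = t powr (-1 / (2*n))"
      have sp: "s > 0" using True unfolding s_def by simp
      note pl1 = powr_lemma(1)[OF True n, folded s_def]
      note pl2 = powr_lemma(2)[OF True n, of "CARD('d)" k, folded s_def]
      have "(\<integral>\<^sup>+x. ennreal (h x * (g x * exp (- t * g x))) \<partial>lborel)
          = ennreal (s ^ CARD('d)) * (\<integral>\<^sup>+x. ennreal (h (s *\<^sub>R x) * (g (s *\<^sub>R x) * exp (- t * g (s *\<^sub>R x)))) \<partial>lborel)"
        by (rule scale_nn[OF _ sp]) measurable
      also have "(\<integral>\<^sup>+x. ennreal (h (s *\<^sub>R x) * (g (s *\<^sub>R x) * exp (- t * g (s *\<^sub>R x)))) \<partial>lborel)
          = (\<integral>\<^sup>+x. ennreal (s ^ k * s ^ (2*n)) * ennreal (h x * g x * exp (- g x)) \<partial>lborel)"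
      proof (rule nn_integral_cong)
        fix x
        have "t * (s ^ (2 * n) * g x) = g x" using pl1 by (simp add: mult.assoc[symmetric])
        then show "ennreal (h (s *\<^sub>R x) * (g (s *\<^sub>R x) * exp (- t * g (s *\<^sub>R x))))
            = ennreal (s ^ k * s ^ (2*n)) * ennreal (h x * g x * exp (- g x))"
          using sp h0 g0 by (simp add: hs gs ennreal_mult[symmetric] mult_ac)
      qed
      also have "\<dots> = ennreal (s ^ k * s ^ (2*n)) * G"
        unfolding G_def by (rule nn_integral_cmult) measurable
      moreover have e: "ennreal (s ^ CARD('d)) * ennreal (s ^ k * s ^ (2*n))
          = ennreal (t powr (- ((real CARD('d) + real k) / (2*n)) - 1))"
        using sp pl2 by (subst ennreal_mult[symmetric]) (auto simp: mult.assoc)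
      ultimately have "(\<integral>\<^sup>+x. ennreal (h x * (g x * exp (- t * g x))) \<partial>lborel)
          = ennreal (t powr (- a - 1)) * G"
        using e unfolding a_def by (simp add: mult.assoc[symmetric])
      then show ?thesis using True
        by (simp add: nn_integral_multc)
    qed
  qed
  also have "\<dots> = (\<integral>\<^sup>+t. ennreal (t powr (- a - 1)) * indicator {1..} t \<partial>lborel) * G"
    by (rule nn_integral_multc) measurable
  also have "\<dots> = ennreal (1 / a) * G" using L3[OF a0] by simp
  finally have "(\<integral>\<^sup>+x. ennreal (h x * exp (- g x)) \<partial>lborel) = ennreal (1 / a) * G" .
  then have "ennreal a * (\<integral>\<^sup>+x. ennreal (h x * exp (- g x)) \<partial>lborel) = ennreal a * ennreal (1 / a) * G"
    by (simp add: mult.assoc)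
  also have "ennreal a * ennreal (1 / a) = 1" using a0 by (simp add: ennreal_mult[symmetric])
  finally show ?thesis unfolding G_def a_def by simp
qed


lemma key_real_nn:
  fixes g h :: "real^'d::finite \<Rightarrow> real" and n k :: nat
  assumes n: "n \<ge> 1"
    and gm: "g \<in> borel_measurable borel" and hm: "h \<in> borel_measurable borel"
    and gpos: "\<And>x. x \<noteq> 0 \<Longrightarrow> g x > 0" and g0: "\<And>x. g x \<ge> 0"
    and h0: "\<And>x. h x \<ge> 0"
    and gs: "\<And>c x. c > 0 \<Longrightarrow> g (c *\<^sub>R x) = c ^ (2*n) * g x"
    and hs: "\<And>c x. c > 0 \<Longrightarrow> h (c *\<^sub>R x) = c ^ k * h x"
  shows "(\<integral>x. h x * g x * exp (- g x) \<partial>lborel)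
        = ((real CARD('d) + real k) / (2*n)) * (\<integral>x. h x * exp (- g x) \<partial>lborel)"
proof -
  note [measurable] = hm gm
  have a0: "(real CARD('d) + real k) / (2*n) \<ge> 0" by simp
  show ?thesis
    using key_nn[OF n gm hm gpos g0 h0 gs hs] a0 g0 h0
    by (subst (1 2) integral_eq_nn_integral) (auto simp: enn2real_mult)
qed

lemma key_real:
  fixes g h :: "real^'d::finite \<Rightarrow> real" and n k :: nat
  assumes n: "n \<ge> 1"
    and gm: "g \<in> borel_measurable borel" and hm: "h \<in> borel_measurable borel"
    and gpos: "\<And>x. x \<noteq> 0 \<Longrightarrow> g x > 0" and g0: "\<And>x. g x \<ge> 0"
    and gs: "\<And>c x. c > 0 \<Longrightarrow> g (c *\<^sub>R x) = c ^ (2*n) * g x"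
    and hs: "\<And>c x. c > 0 \<Longrightarrow> h (c *\<^sub>R x) = c ^ k * h x"
    and i1: "integrable lborel (\<lambda>x. h x * exp (- g x))"
    and i2: "integrable lborel (\<lambda>x. h x * g x * exp (- g x))"
  shows "(\<integral>x. h x * g x * exp (- g x) \<partial>lborel)
        = ((real CARD('d) + real k) / (2*n)) * (\<integral>x. h x * exp (- g x) \<partial>lborel)"
proof -
  note [measurable] = hm gm
  define hp where "hp = (\<lambda>x. max (h x) 0)"
  define hn where "hn = (\<lambda>x. max (- h x) 0)"
  have hpm[measurable]: "hp \<in> borel_measurable borel" unfolding hp_def by measurable
  have hnm[measurable]: "hn \<in> borel_measurable borel" unfolding hn_def by measurable
  have sc: "max (a * y) 0 = a * max y 0" if "(a::real) > 0" for a y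
    using that by (auto simp: max_def mult_le_0_iff)
  have hps: "hp (c *\<^sub>R x) = c ^ k * hp x" if "c > 0" for c x
    using sc[of "c^k"] that unfolding hp_def by (simp add: hs)
  have hns: "hn (c *\<^sub>R x) = c ^ k * hn x" if "c > 0" for c x
    using sc[of "c^k" "- h x"] that unfolding hn_def by (simp add: hs)
  have hsplit: "h x = hp x - hn x" for x unfolding hp_def hn_def by auto
  have bnd: "\<bar>hp x\<bar> \<le> \<bar>h x\<bar>" "\<bar>hn x\<bar> \<le> \<bar>h x\<bar>" for x unfolding hp_def hn_def by auto
  have ip1: "integrable lborel (\<lambda>x. hp x * exp (- g x))"
    by (rule Bochner_Integration.integrable_bound[OF i1]) (auto simp: abs_mult intro!: mult_right_mono bnd)
  have in1: "integrable lborel (\<lambda>x. hn x * exp (- g x))"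
    by (rule Bochner_Integration.integrable_bound[OF i1]) (auto simp: abs_mult intro!: mult_right_mono bnd)
  have ip2: "integrable lborel (\<lambda>x. hp x * g x * exp (- g x))"
    by (rule Bochner_Integration.integrable_bound[OF i2]) (auto simp: abs_mult intro!: mult_right_mono bnd)
  have in2: "integrable lborel (\<lambda>x. hn x * g x * exp (- g x))"
    by (rule Bochner_Integration.integrable_bound[OF i2]) (auto simp: abs_mult intro!: mult_right_mono bnd)
  have "(\<integral>x. h x * g x * exp (- g x) \<partial>lborel)
      = (\<integral>x. hp x * g x * exp (- g x) - hn x * g x * exp (- g x) \<partial>lborel)"
    by (simp add: hsplit algebra_simps)
  also have "\<dots> = (\<integral>x. hp x * g x * exp (- g x) \<partial>lborel) - (\<integral>x. hn x * g x * exp (- g x) \<partial>lborel)"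
    by (rule Bochner_Integration.integral_diff[OF ip2 in2])
  also have "\<dots> = ((real CARD('d) + real k) / (2*n)) * ((\<integral>x. hp x * exp (- g x) \<partial>lborel) - (\<integral>x. hn x * exp (- g x) \<partial>lborel))"
    using key_real_nn[OF n gm hpm gpos g0 _ gs hps] key_real_nn[OF n gm hnm gpos g0 _ gs hns]
    unfolding hp_def hn_def by (simp add: right_diff_distrib)
  also have "(\<integral>x. hp x * exp (- g x) \<partial>lborel) - (\<integral>x. hn x * exp (- g x) \<partial>lborel)
      = (\<integral>x. h x * exp (- g x) \<partial>lborel)"
    by (subst Bochner_Integration.integral_diff[OF ip1 in1, symmetric]) (simp add: hsplit algebra_simps)
  finally show ?thesis .
qed

lemma abs_prod_le: "\<bar>(a::real) * b\<bar> \<le> a^2 + b^2"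
proof -
  have "0 \<le> (\<bar>a\<bar> - \<bar>b\<bar>)^2" by simp
  then have "2 * (\<bar>a\<bar> * \<bar>b\<bar>) \<le> \<bar>a\<bar>^2 + \<bar>b\<bar>^2" by (simp add: power2_diff)
  moreover have "0 \<le> \<bar>a\<bar> * \<bar>b\<bar>" by simp
  ultimately show ?thesis unfolding abs_mult power2_abs by linarith
qed


theorem corollary2p3:
  fixes g :: "real^'d::finite \<Rightarrow> real"
    and n :: nat
    and P :: "('d \<Rightarrow> nat) \<Rightarrow> real^'d \<Rightarrow> real"
    and gt :: "('d \<Rightarrow> nat) \<Rightarrow> real"
  assumes "n \<ge> 1"
    and "is_form (2*n) g"
    and "\<forall>x. g x \<ge> 0"
    and "\<forall>x. g x = 0 \<longrightarrow> x = 0"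
    and "orthonormal_form_basis (2*n) g P"
    and "g = (\<lambda>x. \<Sum>\<alpha>\<in>exps (2*n). gt \<alpha> * P \<alpha> x)"
  shows "Zg g = (4 * real n ^ 2) / (real CARD('d) * (real CARD('d) + 2 * real n))
                  * (\<Sum>\<alpha>\<in>exps (2*n). (gt \<alpha>)\<^sup>2)
       \<and> Zg g = (real CARD('d) + 2 * real n) / real CARD('d)
                  * (\<Sum>\<alpha>\<in>exps (2*n). (\<integral>x. P \<alpha> x * exp (- g x) \<partial>lborel)\<^sup>2)"
proof -
  note n = assms(1)
  define S where "S = (exps (2*n) :: ('d \<Rightarrow> nat) set)"
  define D where "D = real CARD('d)"
  have D0: "D > 0" unfolding D_def by simp
  have fin: "finite S" unfolding S_def by (rule exps_finite)
  have g0: "\<And>x. g x \<ge> 0" using assms(3) by blast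
  have gpos: "\<And>x. x \<noteq> 0 \<Longrightarrow> g x > 0" using assms(3,4) by (metis less_eq_real_def)
  have gm[measurable]: "g \<in> borel_measurable borel" by (rule form_meas[OF assms(2)])
  have gs: "\<And>c x. c > 0 \<Longrightarrow> g (c *\<^sub>R x) = c ^ (2*n) * g x" by (rule form_scale[OF assms(2)])
  have ob: "orthonormal_form_basis (2*n) g P" by fact
  have Pf: "\<And>\<alpha>. \<alpha> \<in> S \<Longrightarrow> is_form (2*n) (P \<alpha>)" using ob unfolding orthonormal_form_basis_def S_def by blast
  have Pm[measurable]: "\<And>\<alpha>. \<alpha> \<in> S \<Longrightarrow> P \<alpha> \<in> borel_measurable borel" using Pf form_meas by blast
  have Pi: "\<And>\<alpha>. \<alpha> \<in> S \<Longrightarrow> integrable lborel (\<lambda>x. (P \<alpha> x)\<^sup>2 * exp (- g x))"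
    using ob unfolding orthonormal_form_basis_def S_def by blast
  have orth: "\<And>\<alpha> \<beta>. \<alpha> \<in> S \<Longrightarrow> \<beta> \<in> S \<Longrightarrow> (\<integral>x. P \<alpha> x * P \<beta> x * exp (- g x) \<partial>lborel) = (if \<alpha> = \<beta> then 1 else 0)"
    using ob unfolding orthonormal_form_basis_def S_def L2_inner_def by blast
  have gsum: "\<And>x. g x = (\<Sum>\<alpha>\<in>S. gt \<alpha> * P \<alpha> x)" using assms(6) unfolding S_def by metis
  have Ei: "integrable lborel (\<lambda>x. P \<alpha> x * P \<beta> x * exp (- g x))" if "\<alpha> \<in> S" "\<beta> \<in> S" for \<alpha> \<beta>
  proof (rule Bochner_Integration.integrable_bound[OF Bochner_Integration.integrable_add[OF Pi[OF that(1)] Pi[OF that(2)]]])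
    show "(\<lambda>x. P \<alpha> x * P \<beta> x * exp (- g x)) \<in> borel_measurable lborel" using that by measurable
    show "AE x in lborel. norm (P \<alpha> x * P \<beta> x * exp (- g x)) \<le> norm ((P \<alpha> x)\<^sup>2 * exp (- g x) + (P \<beta> x)\<^sup>2 * exp (- g x))"
      using abs_prod_le by (auto simp: abs_mult distrib_right[symmetric] intro!: mult_right_mono)
  qed
  have g2eq: "g x * g x * exp (- g x) = (\<Sum>\<alpha>\<in>S. \<Sum>\<beta>\<in>S. gt \<alpha> * gt \<beta> * (P \<alpha> x * P \<beta> x * exp (- g x)))" for x
  proof -
    have "g x * g x = (\<Sum>\<alpha>\<in>S. \<Sum>\<beta>\<in>S. gt \<alpha> * P \<alpha> x * (gt \<beta> * P \<beta> x))"
      by (subst (1 2) gsum) (rule sum_product)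
    then show ?thesis by (simp add: sum_distrib_left sum_distrib_right mult_ac)
  qed
  have g2i: "integrable lborel (\<lambda>x. g x * g x * exp (- g x))"
    unfolding g2eq using Ei by (intro Bochner_Integration.integrable_sum Bochner_Integration.integrable_mult_right) auto
  have delta: "(\<Sum>\<beta>\<in>S. c \<beta> * (if \<alpha> = \<beta> then 1 else 0)) = c \<alpha>" if "\<alpha> \<in> S" for c :: "_ \<Rightarrow> real" and \<alpha>
    using fin that by (simp add: if_distrib sum.delta cong: if_cong)
  have g2v: "(\<integral>x. g x * g x * exp (- g x) \<partial>lborel) = (\<Sum>\<alpha>\<in>S. (gt \<alpha>)\<^sup>2)"
  proof -
    have "(\<integral>x. g x * g x * exp (- g x) \<partial>lborel) = (\<Sum>\<alpha>\<in>S. \<Sum>\<beta>\<in>S. gt \<alpha> * gt \<beta> * (\<integral>x. P \<alpha> x * P \<beta> x * exp (- g x) \<partial>lborel))"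
      unfolding g2eq using Ei
      by (simp add: Bochner_Integration.integral_sum Bochner_Integration.integrable_sum)
    also have "\<dots> = (\<Sum>\<alpha>\<in>S. \<Sum>\<beta>\<in>S. gt \<alpha> * gt \<beta> * (if \<alpha> = \<beta> then 1 else 0))"
      using orth by (intro sum.cong refl) simp
    also have "\<dots> = (\<Sum>\<alpha>\<in>S. (gt \<alpha>)\<^sup>2)"
      using delta[of _ "\<lambda>\<beta>. gt _ * gt \<beta>"] by (intro sum.cong refl) (simp add: power2_eq_square)
    finally show ?thesis .
  qed
  have hg: "(\<integral>x. g x * g x * exp (- g x) \<partial>lborel) = ((D + real (2*n)) / (2*n)) * (\<integral>x. g x * exp (- g x) \<partial>lborel)"
    using key_real_nn[OF n gm gm gpos g0 g0 gs gs] unfolding D_def by simp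
  have h1: "(\<integral>x. g x * exp (- g x) \<partial>lborel) = (D / (2*n)) * Zg g"
    using key_real_nn[OF n gm _ gpos g0 _ gs, of "\<lambda>_. 1" 0] unfolding D_def Zg_def by simp
  have part1: "Zg g = (4 * real n ^ 2) / (D * (D + 2 * real n)) * (\<Sum>\<alpha>\<in>S. (gt \<alpha>)\<^sup>2)"
  proof -
    have q: "(\<Sum>\<alpha>\<in>S. (gt \<alpha>)\<^sup>2) = (D + real (2*n)) / (2*n) * (D / (2*n) * Zg g)"
      using g2v hg h1 by simp
    have pos: "D * (D + 2 * real n) \<noteq> 0" "4 * real n ^ 2 \<noteq> 0" using D0 n by auto
    have q2: "(\<Sum>\<alpha>\<in>S. (gt \<alpha>)\<^sup>2) = (D * (D + 2 * real n)) / (4 * real n ^ 2) * Zg g"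
      unfolding q using n by (simp add: field_simps power2_eq_square)
    show ?thesis unfolding q2 using pos by simp
  qed
  have ei: "integrable lborel (\<lambda>x. exp (- g x))"
  proof -
    have k1: "(\<integral>\<^sup>+x. ennreal (1 * g x * exp (- g x)) \<partial>lborel) = ennreal ((D + real 0) / (2*n)) * (\<integral>\<^sup>+x. ennreal (1 * exp (- g x)) \<partial>lborel)"
      using key_nn[OF n gm _ gpos g0 _ gs, of "\<lambda>_. 1" 0] unfolding D_def by simp
    have k2: "(\<integral>\<^sup>+x. ennreal (g x * g x * exp (- g x)) \<partial>lborel) = ennreal ((D + real (2*n)) / (2*n)) * (\<integral>\<^sup>+x. ennreal (g x * exp (- g x)) \<partial>lborel)"
      using key_nn[OF n gm gm gpos g0 g0 gs gs] unfolding D_def by simp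
    have "(\<integral>\<^sup>+x. ennreal (g x * g x * exp (- g x)) \<partial>lborel) < \<infinity>"
      using integrableD(2)[OF g2i] by (simp add: less_top)
    then have "ennreal ((D + real (2*n)) / (2*n)) * (ennreal (D / (2*n)) * (\<integral>\<^sup>+x. ennreal (exp (- g x)) \<partial>lborel)) < \<infinity>"
      using k1 k2 by simp
    moreover have "(D + real (2*n)) / (2*n) > 0" "D / (2*n) > 0" using D0 n by auto
    ultimately have "(\<integral>\<^sup>+x. ennreal (exp (- g x)) \<partial>lborel) < \<infinity>"
      by (auto simp: ennreal_mult_less_top top.not_eq_extremum)
    then show ?thesis by (intro integrableI_nonneg) auto
  qed
  have Pe: "integrable lborel (\<lambda>x. P \<alpha> x * exp (- g x))" if "\<alpha> \<in> S" for \<alpha>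
  proof (rule Bochner_Integration.integrable_bound[OF Bochner_Integration.integrable_add[OF Pi[OF that] ei]])
    show "(\<lambda>x. P \<alpha> x * exp (- g x)) \<in> borel_measurable lborel" using that by measurable
    have "\<bar>p\<bar> \<le> p\<^sup>2 + 1" for p :: real using abs_prod_le[of p 1] by simp
    then have "\<bar>P \<alpha> x\<bar> * exp (- g x) \<le> ((P \<alpha> x)\<^sup>2 + 1) * exp (- g x)" for x
      by (intro mult_right_mono) auto
    then show "AE x in lborel. norm (P \<alpha> x * exp (- g x)) \<le> norm ((P \<alpha> x)\<^sup>2 * exp (- g x) + exp (- g x))"
      by (simp add: abs_mult distrib_right)
  qed
  have Pgeq: "P \<alpha> x * g x * exp (- g x) = (\<Sum>\<beta>\<in>S. gt \<beta> * (P \<alpha> x * P \<beta> x * exp (- g x)))" for \<alpha> x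
    by (subst gsum) (simp add: sum_distrib_left sum_distrib_right mult_ac)
  have Pgi: "integrable lborel (\<lambda>x. P \<alpha> x * g x * exp (- g x))" if "\<alpha> \<in> S" for \<alpha>
    unfolding Pgeq using Ei that by (intro Bochner_Integration.integrable_sum Bochner_Integration.integrable_mult_right) auto
  have Pgv: "(\<integral>x. P \<alpha> x * g x * exp (- g x) \<partial>lborel) = gt \<alpha>" if "\<alpha> \<in> S" for \<alpha>
  proof -
    have "(\<integral>x. P \<alpha> x * g x * exp (- g x) \<partial>lborel) = (\<Sum>\<beta>\<in>S. gt \<beta> * (\<integral>x. P \<alpha> x * P \<beta> x * exp (- g x) \<partial>lborel))"
      unfolding Pgeq using Ei that by (simp add: Bochner_Integration.integral_sum)
    also have "\<dots> = (\<Sum>\<beta>\<in>S. gt \<beta> * (if \<alpha> = \<beta> then 1 else 0))"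
      using orth that by (intro sum.cong refl) simp
    also have "\<dots> = gt \<alpha>" using delta[OF that] by simp
    finally show ?thesis .
  qed
  have mu: "(\<integral>x. P \<alpha> x * exp (- g x) \<partial>lborel) = (2*n) / (D + 2*n) * gt \<alpha>" if "\<alpha> \<in> S" for \<alpha>
  proof -
    have "gt \<alpha> = ((D + real (2*n)) / (2*n)) * (\<integral>x. P \<alpha> x * exp (- g x) \<partial>lborel)"
      using key_real[OF n gm Pm[OF that] gpos g0 gs form_scale[OF Pf[OF that]] Pe[OF that] Pgi[OF that]]
        Pgv[OF that] unfolding D_def by simp
    then show ?thesis using D0 n by (simp add: field_simps)
  qed
  have M: "(\<Sum>\<alpha>\<in>S. (\<integral>x. P \<alpha> x * exp (- g x) \<partial>lborel)\<^sup>2) = ((2*n) / (D + 2*n))\<^sup>2 * (\<Sum>\<alpha>\<in>S. (gt \<alpha>)\<^sup>2)"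
    unfolding sum_distrib_left by (intro sum.cong refl) (simp add: mu power_mult_distrib power_divide)
  then have part2: "Zg g = (D + 2 * real n) / D * (\<Sum>\<alpha>\<in>S. (\<integral>x. P \<alpha> x * exp (- g x) \<partial>lborel)\<^sup>2)"
  proof -
    have c: "(D + 2 * real n) / D * ((2*n) / (D + 2*n))\<^sup>2 = (4 * real n ^ 2) / (D * (D + 2 * real n))"
    proof -
      have nz: "D \<noteq> 0" "D + 2 * real n \<noteq> 0" using D0 by auto
      show ?thesis using nz by (simp add: divide_simps power2_eq_square)
    qed
    show ?thesis unfolding M mult.assoc[symmetric] c by (rule part1)
  qed
  show ?thesis using part1 part2 unfolding S_def D_def by blast
qed

end
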